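(* Let $m=|V|\ge2$, $v,w\in V$ with $v\ne w$, and $\beta=\frac1m\sum_{u\in V}e_u$ the barycenter of $S$. Define $$\ell_{vw}(x)=\max\{0,n_{vw}^Tx-c\}-\ell_v^{1/2}(x)-\ell_w^{1/2}(x),\qquad n_{vw}=4(e_{vw}-\beta),\quad c=1-\frac4m.$$ Then $\ell_{vw}$ is affine on each corner $S_u$, $u\in V$; $\ell_{vw}(e_{vw})=1$; $\ell_{vw}$ vanishes at every vertex of $S_v$ and of $S_w$ other than $e_{vw}$; and $\ell_{vw}(x)=0$ for all $x\in S_u$ with $u\notin\{v,w\}$.
   Context: $V$ is a finite index set, $e_u$ ($u\in V$) the standard orthonormal basis of $\mathbb{R}^V$, $S=\operatorname{conv}\{e_u:u\in V\}$. For $u\ne w$, $e^\mu_{uw}=(1-\mu)e_u+\mu e_w$, $S_u^\mu=\operatorname{conv}(\{e_u\}\cup\{e_{uw}^\mu:w\ne u\})$, and abbreviations $e_{uw}=e^{1/2}_{uw}=\frac12(e_u+e_w)$, $S_u=S_u^{1/2}$. For $u\in V$, $\ell_u^{1/2}(x)=\max\{0,(n_u)^Tx-d\}$ with $n_u=\frac{2}{m}\sum_{w\ne u}(e_u-e_w)$ and $d=\frac{m/2-1}{m/2}$ (the function $\ell_u^\mu$ with $\ell_u^\mu(x)=\max\{0,(n_u^\mu)^Tx-d_\mu\}$, $n_u^\mu=\frac1{\mu m}\sum_{w\ne u}(e_u-e_w)$, $d_\mu=\frac{(1-\mu)m-1}{\mu m}$, at $\mu=1/2$). *)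

theory Defs
  imports "HOL-Analysis.Analysis"
begin

text \<open>The finite index set V is modelled as a finite type 'n (V = UNIV), so
  R^V is real^'n and m = CARD('n).\<close>

definition ev :: "'n::finite \<Rightarrow> real^'n" where
  "ev u = axis u 1"

definition emu :: "real \<Rightarrow> 'n::finite \<Rightarrow> 'n \<Rightarrow> real^'n" where
  "emu \<mu> u w = (1 - \<mu>) *\<^sub>R ev u + \<mu> *\<^sub>R ev w"

definition Smu :: "real \<Rightarrow> 'n::finite \<Rightarrow> (real^'n) set" where
  "Smu \<mu> u = convex hull (insert (ev u) {emu \<mu> u w | w. w \<noteq> u})"

abbreviation ehalf :: "'n::finite \<Rightarrow> 'n \<Rightarrow> real^'n" where
  "ehalf u w \<equiv> emu (1/2) u w"

abbreviation Shalf :: "'n::finite \<Rightarrow> (real^'n) set" where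
  "Shalf u \<equiv> Smu (1/2) u"

definition nmu :: "real \<Rightarrow> 'n::finite \<Rightarrow> real^'n" where
  "nmu \<mu> u = (1 / (\<mu> * real CARD('n))) *\<^sub>R (\<Sum>w\<in>UNIV - {u}. ev u - ev w)"

definition dmu :: "real \<Rightarrow> 'n::finite itself \<Rightarrow> real" where
  "dmu \<mu> _ = ((1 - \<mu>) * real CARD('n) - 1) / (\<mu> * real CARD('n))"

definition ellmu :: "real \<Rightarrow> 'n::finite \<Rightarrow> real^'n \<Rightarrow> real" where
  "ellmu \<mu> u x = max 0 (nmu \<mu> u \<bullet> x - dmu \<mu> TYPE('n))"

definition bary :: "'n::finite itself \<Rightarrow> real^'n" where
  "bary _ = (1 / real CARD('n)) *\<^sub>R (\<Sum>u\<in>UNIV. ev u)"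

definition ellvw :: "'n::finite \<Rightarrow> 'n \<Rightarrow> real^'n \<Rightarrow> real" where
  "ellvw v w x = max 0 ((4 *\<^sub>R (ehalf v w - bary TYPE('n))) \<bullet> x - (1 - 4 / real CARD('n)))
                 - ellmu (1/2) v x - ellmu (1/2) w x"

definition affine_on_set :: "(real^'n) set \<Rightarrow> (real^'n \<Rightarrow> real) \<Rightarrow> bool" where
  "affine_on_set S f \<longleftrightarrow> (\<exists>a b. \<forall>x\<in>S. f x = a \<bullet> x + b)"

end

theory Submission imports Defs begin

lemma ev_inner: "ev u \<bullet> x = x $ u"
  by (simp add: ev_def inner_axis')

lemma ev_nth: "ev u $ i = (if i = u then 1 else 0)"
  by (simp add: ev_def axis_def)

lemma nmu_inner:
  "nmu (1/2) u \<bullet> (x::real^'n::finite) = (2 / real CARD('n)) * (real CARD('n) * x$u - sum (\<lambda>i. x$i) UNIV)"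
proof -
  have "(\<Sum>w\<in>UNIV - {u}. ev u - ev w) \<bullet> x = (\<Sum>w\<in>UNIV - {u}. x$u - x$w)"
    by (simp add: inner_sum_left inner_diff_left ev_inner)
  also have "\<dots> = (real CARD('n) - 1) * x$u - (sum (\<lambda>i. x$i) UNIV - x$u)"
    by (simp add: sum_subtractf sum_diff card_Diff_singleton)
  finally have A: "(\<Sum>w\<in>UNIV - {u}. ev u - ev w) \<bullet> x = (real CARD('n) - 1) * x$u - (sum (\<lambda>i. x$i) UNIV - x$u)" .
  have B: "nmu (1/2) u \<bullet> x = (2 / real CARD('n)) * ((\<Sum>w\<in>UNIV - {u}. ev u - ev w) \<bullet> x)"
    by (simp add: nmu_def)
  show ?thesis unfolding B A by (simp add: algebra_simps)
qed

lemma bary_inner: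
  "bary TYPE('n::finite) \<bullet> (x::real^'n) = sum (\<lambda>i. x$i) UNIV / real CARD('n)"
  by (simp add: bary_def inner_sum_left ev_inner)

lemma ell_formula:
  fixes x :: "real^'n::finite"
  assumes "sum (\<lambda>i. x$i) UNIV = 1"
  shows "ellvw v w x = max 0 (2*x$v + 2*x$w - 1) - max 0 (2*x$v - 1) - max 0 (2*x$w - 1)"
proof -
  have m: "real CARD('n) > 0" by simp
  have e: "ehalf v w \<bullet> x = x$v/2 + x$w/2"
    by (simp add: emu_def inner_add_left ev_inner)
  have 1: "(4 *\<^sub>R (ehalf v w - bary TYPE('n))) \<bullet> x - (1 - 4 / real CARD('n)) = 2*x$v + 2*x$w - 1"
    using m by (simp add: inner_diff_left e bary_inner assms field_simps)
  have 2: "\<And>u. nmu (1/2) u \<bullet> x - dmu (1/2) TYPE('n) = 2*x$u - 1"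
    using m by (simp add: nmu_inner assms dmu_def field_simps)
  show ?thesis unfolding ellvw_def ellmu_def 1 2 by simp
qed

lemma Shalf_props:
  fixes x :: "real^'n::finite"
  assumes "x \<in> Shalf u"
  shows "sum (\<lambda>i. x$i) UNIV = 1 \<and> x$u \<ge> 1/2 \<and> (\<forall>i. x$i \<ge> 0)"
proof -
  let ?C = "{x::real^'n. sum (\<lambda>i. x$i) UNIV = 1 \<and> x$u \<ge> 1/2 \<and> (\<forall>i. x$i \<ge> 0)}"
  have sev: "sum (\<lambda>i. ev u $ i) UNIV = 1" for u :: 'n
    by (simp add: ev_nth)
  have cv: "convex ?C"
  proof (rule convexI)
    fix a b :: "real^'n" and p q :: real
    assume A: "a \<in> ?C" and B: "b \<in> ?C" and H: "0 \<le> p" "0 \<le> q" "p + q = 1"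
    have "sum (\<lambda>i. p * a$i + q * b$i) UNIV = p * sum (\<lambda>i. a$i) UNIV + q * sum (\<lambda>i. b$i) UNIV"
      by (simp add: sum.distrib sum_distrib_left)
    also have "\<dots> = 1" using A B H by simp
    finally have s1: "sum (\<lambda>i. p * a$i + q * b$i) UNIV = 1" .
    have "p * (1/2) \<le> p * a$u" using H A by (intro mult_left_mono) auto
    moreover have "q * (1/2) \<le> q * b$u" using H B by (intro mult_left_mono) auto
    ultimately have s2: "1/2 \<le> p * a$u + q * b$u" using H by linarith
    have s3: "\<forall>i. 0 \<le> p * a$i + q * b$i" using A B H by simp
    show "p *\<^sub>R a + q *\<^sub>R b \<in> ?C" using s1 s2 s3 by simp
  qed
  have ev_in: "ev u \<in> ?C" using sev by (simp add: ev_nth)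
  have emu_in: "emu (1/2) u w \<in> ?C" if "w \<noteq> u" for w
  proof -
    have "sum (\<lambda>i. emu (1/2) u w $ i) UNIV = 1"
      by (simp add: emu_def sum.distrib sum_divide_distrib[symmetric] sev)
    moreover have "1/2 \<le> emu (1/2) u w $ u" using that by (simp add: emu_def ev_nth)
    moreover have "\<forall>i. 0 \<le> emu (1/2) u w $ i" by (simp add: emu_def ev_nth)
    ultimately show ?thesis by simp
  qed
  have "insert (ev u) {emu (1/2) u w | w. w \<noteq> u} \<subseteq> ?C"
    using ev_in emu_in by blast
  hence "Shalf u \<subseteq> ?C" unfolding Smu_def by (rule hull_minimal) (rule cv)
  thus ?thesis using assms by blast
qed

lemma coord_bound:
  fixes x :: "real^'n::finite"
  assumes "sum (\<lambda>i. x$i) UNIV = 1" "\<forall>i. x$i \<ge> 0" "a \<noteq> b"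
  shows "x$a + x$b \<le> 1"
proof -
  have "x$a + x$b = sum (\<lambda>i. x$i) {a,b}" using assms by simp
  also have "\<dots> \<le> sum (\<lambda>i. x$i) UNIV" using assms by (intro sum_mono2) auto
  finally show ?thesis using assms by simp
qed

lemma coord_bound3:
  fixes x :: "real^'n::finite"
  assumes "sum (\<lambda>i. x$i) UNIV = 1" "\<forall>i. x$i \<ge> 0" "a \<noteq> b" "a \<noteq> c" "b \<noteq> c"
  shows "x$a + x$b + x$c \<le> 1"
proof -
  have "x$a + x$b + x$c = sum (\<lambda>i. x$i) {a,b,c}" using assms by simp
  also have "\<dots> \<le> sum (\<lambda>i. x$i) UNIV" using assms by (intro sum_mono2) auto
  finally show ?thesis using assms by simp
qed


lemma in_Shalf_ev: "ev u \<in> Shalf u"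
  unfolding Smu_def by (rule hull_inc) simp

lemma in_Shalf_emu: "w \<noteq> u \<Longrightarrow> ehalf u w \<in> Shalf u"
  unfolding Smu_def by (rule hull_inc) blast

lemma zero_on_other:
  fixes v w u :: "'n::finite"
  assumes "v \<noteq> w" "u \<noteq> v" "u \<noteq> w" "x \<in> Shalf u"
  shows "ellvw v w x = 0"
proof -
  have P: "sum (\<lambda>i. x$i) UNIV = 1" "x$u \<ge> 1/2" "\<forall>i. x$i \<ge> 0"
    using Shalf_props[OF assms(4)] by auto
  have "x$u + x$v + x$w \<le> 1" using coord_bound3[OF P(1) P(3)] assms by auto
  note B = this
  have nv: "x$v \<ge> 0" and nw: "x$w \<ge> 0" using P(3) by auto
  have m1: "max 0 (2*x$v + 2*x$w - 1) = 0" using B P(1) P(2) nv nw by (simp add: max_def)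
  have m2: "max 0 (2*x$v - 1) = 0" using B P(1) P(2) nv nw by (simp add: max_def)
  have m3: "max 0 (2*x$w - 1) = 0" using B P(1) P(2) nv nw by (simp add: max_def)
  show ?thesis unfolding ell_formula[OF P(1)] m1 m2 m3 by simp
qed

lemma affine_v:
  fixes v w :: "'n::finite"
  assumes "v \<noteq> w" "x \<in> Shalf v"
  shows "ellvw v w x = 2 * x$w"
proof -
  have P: "sum (\<lambda>i. x$i) UNIV = 1" "x$v \<ge> 1/2" "\<forall>i. x$i \<ge> 0"
    using Shalf_props[OF assms(2)] by auto
  have "x$v + x$w \<le> 1" using coord_bound[OF P(1) P(3)] assms by auto
  note B = this
  have nv: "x$v \<ge> 0" and nw: "x$w \<ge> 0" using P(3) by auto
  have m1: "max 0 (2*x$v + 2*x$w - 1) = 2*x$v + 2*x$w - 1" using B P(1) P(2) nv nw by (simp add: max_def)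
  have m2: "max 0 (2*x$v - 1) = 2*x$v - 1" using B P(1) P(2) nv nw by (simp add: max_def)
  have m3: "max 0 (2*x$w - 1) = 0" using B P(1) P(2) nv nw by (simp add: max_def)
  show ?thesis unfolding ell_formula[OF P(1)] m1 m2 m3 by simp
qed

lemma affine_w:
  fixes v w :: "'n::finite"
  assumes "v \<noteq> w" "x \<in> Shalf w"
  shows "ellvw v w x = 2 * x$v"
proof -
  have P: "sum (\<lambda>i. x$i) UNIV = 1" "x$w \<ge> 1/2" "\<forall>i. x$i \<ge> 0"
    using Shalf_props[OF assms(2)] by auto
  have "x$v + x$w \<le> 1" using coord_bound[OF P(1) P(3)] assms by auto
  note B = this
  have nv: "x$v \<ge> 0" and nw: "x$w \<ge> 0" using P(3) by auto
  have m1: "max 0 (2*x$v + 2*x$w - 1) = 2*x$v + 2*x$w - 1" using B P(1) P(2) nv nw by (simp add: max_def)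
  have m2: "max 0 (2*x$v - 1) = 0" using B P(1) P(2) nv nw by (simp add: max_def)
  have m3: "max 0 (2*x$w - 1) = 2*x$w - 1" using B P(1) P(2) nv nw by (simp add: max_def)
  show ?thesis unfolding ell_formula[OF P(1)] m1 m2 m3 by simp
qed

theorem lemmaA2:
  fixes v w :: "'n::finite"
  assumes "CARD('n) \<ge> 2" and "v \<noteq> w"
  shows "(\<forall>u. affine_on_set (Shalf u) (ellvw v w))
    \<and> ellvw v w (ehalf v w) = 1
    \<and> ellvw v w (ev v) = 0 \<and> ellvw v w (ev w) = 0
    \<and> (\<forall>u. u \<noteq> v \<and> u \<noteq> w \<longrightarrow> ellvw v w (ehalf v u) = 0 \<and> ellvw v w (ehalf w u) = 0)
    \<and> (\<forall>u. u \<noteq> v \<and> u \<noteq> w \<longrightarrow> (\<forall>x\<in>Shalf u. ellvw v w x = 0))"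
proof (intro conjI allI impI ballI)
  fix u :: 'n
  show "affine_on_set (Shalf u) (ellvw v w)"
    unfolding affine_on_set_def
  proof (cases "u = v")
    case True
    show "\<exists>a b. \<forall>x\<in>Shalf u. ellvw v w x = a \<bullet> x + b"
      proof (intro exI[of _ "2 *\<^sub>R ev w"] exI[of _ 0] ballI)
        fix x assume "x \<in> Shalf u"
        then show "ellvw v w x = (2 *\<^sub>R ev w) \<bullet> x + 0"
          using affine_v[OF assms(2)] True by (simp add: ev_inner)
      qed
  next
    case F: False
    show "\<exists>a b. \<forall>x\<in>Shalf u. ellvw v w x = a \<bullet> x + b"
    proof (cases "u = w")
      case True
      show ?thesis
        using True assms(2) affine_w by (intro exI[of _ "2 *\<^sub>R ev v"] exI[of _ 0]) (simp add: ev_inner affine_v affine_w True assms(2))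
    next
      case False
      show ?thesis
      proof (intro exI[of _ 0] ballI)
        fix x assume "x \<in> Shalf u"
        then show "ellvw v w x = 0 \<bullet> x + 0"
          using zero_on_other[OF assms(2) F False] by simp
      qed
    qed
  qed
next
  show "ellvw v w (ehalf v w) = 1"
    using affine_v[OF assms(2) in_Shalf_emu[of w v]] assms(2)
    by (simp add: emu_def ev_nth)
next
  show "ellvw v w (ev v) = 0"
    using affine_v[OF assms(2) in_Shalf_ev[of v]] assms(2) by (simp add: ev_nth)
next
  show "ellvw v w (ev w) = 0"
    using affine_w[OF assms(2) in_Shalf_ev[of w]] assms(2) by (simp add: ev_nth)
next
  fix u assume u: "u \<noteq> v \<and> u \<noteq> w"
  show "ellvw v w (ehalf v u) = 0"
    using affine_v[OF assms(2) in_Shalf_emu[of u v]] u assms(2)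
    by (auto simp: emu_def ev_nth)
next
  fix u assume u: "u \<noteq> v \<and> u \<noteq> w"
  show "ellvw v w (ehalf w u) = 0"
    using affine_w[OF assms(2) in_Shalf_emu[of u w]] u assms(2)
    by (auto simp: emu_def ev_nth)
next
  fix u x assume u: "u \<noteq> v \<and> u \<noteq> w" and "x \<in> Shalf u"
  then show "ellvw v w x = 0" using zero_on_other assms(2) by blast
qed

end
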